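(* Let $W$ be a positive word such that either there exist positive words $A_1,\dots,A_{n-1}$ with $$W\doteq\sigma_1A_1\doteq\sigma_2A_2\doteq\cdots\doteq\sigma_{n-1}A_{n-1},$$ or there exist positive words $B_1,\dots,B_{n-1}$ with $$W\doteq B_1\sigma_1\doteq B_2\sigma_2\doteq\cdots\doteq B_{n-1}\sigma_{n-1}.$$ Then $W\doteq\Delta Z$ for some positive word $Z$.
   Context: Fix $n\ge 2$. The positive singular braid monoid $SB_n^+$ is the monoid with generators $\sigma_1,\dots,\sigma_{n-1},x_1,\dots,x_{n-1}$ and relations: $\sigma_i\sigma_j=\sigma_j\sigma_i$ and $x_ix_j=x_jx_i$ if $|i-j|>1$; $x_i\sigma_j=\sigma_jx_i$ if $|i-j|\ne 1$; $\sigma_i\sigma_{i+1}\sigma_i=\sigma_{i+1}\sigma_i\sigma_{i+1}$; $\sigma_i\sigma_{i+1}x_i=x_{i+1}\sigma_i\sigma_{i+1}$; $\sigma_{i+1}\sigma_ix_{i+1}=x_i\sigma_{i+1}\sigma_i$. A positive word is a word in the letters $\sigma_i,x_i$; $A\doteq B$ means they represent the same element of $SB_n^+$. Garside's fundamental word is $\Delta\equiv\sigma_1\cdots\sigma_{n-1}\,\sigma_1\cdots\sigma_{n-2}\cdots\sigma_1\sigma_2\,\sigma_1$. *)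

theory Defs
  imports Main
begin

text \<open>Letters of the positive singular braid monoid SB_n^+: Sig i is sigma_i, X i is x_i
  (indices 1 .. n-1). Positive words are lists of letters.\<close>

datatype sb_letter = Sig nat | X nat

type_synonym sb_word = "sb_letter list"

definition valid_word :: "nat \<Rightarrow> sb_word \<Rightarrow> bool" where
  "valid_word n w \<longleftrightarrow> (\<forall>l\<in>set w. case l of Sig i \<Rightarrow> 1 \<le> i \<and> i \<le> n - 1
                                            | X i \<Rightarrow> 1 \<le> i \<and> i \<le> n - 1)"

inductive sb_rel :: "nat \<Rightarrow> sb_word \<Rightarrow> sb_word \<Rightarrow> bool" for n where
  comm_ss: "\<lbrakk>1 \<le> i; i \<le> n - 1; 1 \<le> j; j \<le> n - 1; i + 1 < j \<or> j + 1 < i\<rbrakk>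
             \<Longrightarrow> sb_rel n [Sig i, Sig j] [Sig j, Sig i]"
| comm_xx: "\<lbrakk>1 \<le> i; i \<le> n - 1; 1 \<le> j; j \<le> n - 1; i + 1 < j \<or> j + 1 < i\<rbrakk>
             \<Longrightarrow> sb_rel n [X i, X j] [X j, X i]"
| comm_xs: "\<lbrakk>1 \<le> i; i \<le> n - 1; 1 \<le> j; j \<le> n - 1; i \<noteq> j + 1; j \<noteq> i + 1\<rbrakk>
             \<Longrightarrow> sb_rel n [X i, Sig j] [Sig j, X i]"
| braid: "\<lbrakk>1 \<le> i; i + 1 \<le> n - 1\<rbrakk>
             \<Longrightarrow> sb_rel n [Sig i, Sig (i+1), Sig i] [Sig (i+1), Sig i, Sig (i+1)]"
| mixed1: "\<lbrakk>1 \<le> i; i + 1 \<le> n - 1\<rbrakk>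
             \<Longrightarrow> sb_rel n [Sig i, Sig (i+1), X i] [X (i+1), Sig i, Sig (i+1)]"
| mixed2: "\<lbrakk>1 \<le> i; i + 1 \<le> n - 1\<rbrakk>
             \<Longrightarrow> sb_rel n [Sig (i+1), Sig i, X (i+1)] [X i, Sig (i+1), Sig i]"

inductive sb_eq :: "nat \<Rightarrow> sb_word \<Rightarrow> sb_word \<Rightarrow> bool" for n where
  sb_refl: "sb_eq n w w"
| sb_step: "\<lbrakk>sb_rel n u v \<or> sb_rel n v u; sb_eq n (p @ v @ q) w\<rbrakk> \<Longrightarrow> sb_eq n (p @ u @ q) w"

text \<open>Garside's fundamental word sigma_1..sigma_{n-1} sigma_1..sigma_{n-2} ... sigma_1.\<close>
definition Delta :: "nat \<Rightarrow> sb_word" where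
  "Delta n = concat (map (\<lambda>k. map Sig [1..<n - k]) [0..<n - 1])"

end

theory Submission
  imports Defs
begin

lemma sb_rel_len: "sb_rel n u v \<Longrightarrow> length u = length v"
  by (induct rule: sb_rel.induct) auto

lemma sb_eq_len: "sb_eq n u v \<Longrightarrow> length u = length v"
  by (induct rule: sb_eq.induct) (auto dest: sb_rel_len)

lemma sb_eq_trans: "sb_eq n u v \<Longrightarrow> sb_eq n v w \<Longrightarrow> sb_eq n u w"
proof (induct rule: sb_eq.induct)
  case (sb_refl w) then show ?case .
next
  case (sb_step u v p q w')
  show ?case by (rule sb_eq.sb_step[OF sb_step(1) sb_step(3)[OF sb_step(4)]])
qed

lemma sb_eq_one: "sb_rel n u v \<or> sb_rel n v u \<Longrightarrow> sb_eq n (p @ u @ q) (p @ v @ q)"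
  by (rule sb_eq.sb_step[OF _ sb_eq.sb_refl]) simp

lemma sb_eq_sym: "sb_eq n u v \<Longrightarrow> sb_eq n v u"
proof (induct rule: sb_eq.induct)
  case (sb_refl w) then show ?case by (rule sb_eq.sb_refl)
next
  case (sb_step u v p q w)
  have "sb_eq n (p @ v @ q) (p @ u @ q)" using sb_step(1) by (intro sb_eq_one) auto
  with sb_step(3) show ?case by (rule sb_eq_trans)
qed

lemma sb_eq_cong: "sb_eq n u v \<Longrightarrow> sb_eq n (x @ u @ y) (x @ v @ y)"
proof (induct rule: sb_eq.induct)
  case (sb_refl w) then show ?case by (rule sb_eq.sb_refl)
next
  case (sb_step u v p q w)
  have e: "x @ (p @ v @ q) @ y = (x @ p) @ v @ (q @ y)" by simp
  have "sb_eq n ((x @ p) @ v @ (q @ y)) (x @ w @ y)" using sb_step(3) unfolding e .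
  then have "sb_eq n ((x @ p) @ u @ (q @ y)) (x @ w @ y)"
    by (rule sb_eq.sb_step[OF sb_step(1)])
  then show ?case by simp
qed

lemma sb_eq_app: "sb_eq n u v \<Longrightarrow> sb_eq n u' v' \<Longrightarrow> sb_eq n (u @ u') (v @ v')"
  using sb_eq_cong[of n u v "[]" u'] sb_eq_cong[of n u' v' v "[]"]
  by (auto intro: sb_eq_trans)

lemma sb_eq_Cons: "sb_eq n u v \<Longrightarrow> sb_eq n (a # u) (a # v)"
  using sb_eq_cong[of n u v "[a]" "[]"] by simp

lemmas sb_refl = sb_eq.sb_refl

definition vl :: "nat \<Rightarrow> sb_letter \<Rightarrow> bool" where
  "vl n l \<longleftrightarrow> valid_word n [l]"

lemma valid_word_iff: "valid_word n w \<longleftrightarrow> (\<forall>l\<in>set w. vl n l)"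
  by (auto simp: valid_word_def vl_def)

lemma valid_app[simp]: "valid_word n (u @ v) \<longleftrightarrow> valid_word n u \<and> valid_word n v"
  by (auto simp: valid_word_def)

lemma valid_Cons[simp]: "valid_word n (a # v) \<longleftrightarrow> vl n a \<and> valid_word n v"
  by (auto simp: valid_word_def vl_def)

lemma valid_Nil[simp]: "valid_word n []"
  by (auto simp: valid_word_def)

lemma vl_simps[simp]: "vl n (Sig i) \<longleftrightarrow> 1 \<le> i \<and> i \<le> n - 1" "vl n (X i) \<longleftrightarrow> 1 \<le> i \<and> i \<le> n - 1"
  by (auto simp: vl_def valid_word_def)

lemma sb_rel_valid: "sb_rel n u v \<Longrightarrow> valid_word n u \<and> valid_word n v"
  by (induct rule: sb_rel.induct) auto

lemma sb_eq_valid: "sb_eq n u v \<Longrightarrow> valid_word n u \<Longrightarrow> valid_word n v"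
  by (induct rule: sb_eq.induct) (auto dest: sb_rel_valid)

fun comp0 :: "sb_letter \<Rightarrow> sb_letter \<Rightarrow> (sb_word \<times> sb_word) option" where
  "comp0 (Sig i) (Sig j) = (if i + 1 < j \<or> j + 1 < i then Some ([Sig j], [Sig i])
      else if j = i + 1 \<or> i = j + 1 then Some ([Sig j, Sig i], [Sig i, Sig j]) else None)"
| "comp0 (X i) (X j) = (if i + 1 < j \<or> j + 1 < i then Some ([X j], [X i]) else None)"
| "comp0 (X i) (Sig j) = (if i = j + 1 \<or> j = i + 1 then Some ([Sig j, Sig i], [Sig i, X j])
      else Some ([Sig j], [X i]))"
| "comp0 (Sig j) (X i) = (if i = j + 1 \<or> j = i + 1 then Some ([Sig i, X j], [Sig j, Sig i])
      else Some ([X i], [Sig j]))"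

datatype rres = Fail | Out | Ok sb_word sb_word

fun rv :: "nat \<Rightarrow> sb_word \<Rightarrow> sb_word \<Rightarrow> rres" where
  "rv 0 u v = Out"
| "rv (Suc f) [] v = Ok v []"
| "rv (Suc f) (a#u) [] = Ok [] (a#u)"
| "rv (Suc f) (a#u) (b#v) = (if a = b then rv f u v else
     (case comp0 a b of None \<Rightarrow> Fail | Some (r, s) \<Rightarrow>
       (case rv f u r of Ok u1 r1 \<Rightarrow>
          (case rv f v (s @ r1) of Ok v1 w1 \<Rightarrow> Ok (u1 @ w1) v1 | e \<Rightarrow> e)
        | e \<Rightarrow> e)))"

definition F :: nat where "F = 12"

definition cube_ok :: "sb_letter \<Rightarrow> sb_letter \<Rightarrow> sb_letter \<Rightarrow> bool" where
"cube_ok a b c = (a = b \<or> b = c \<or> a = c \<or>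
  (case comp0 c a of None \<Rightarrow> True | Some (rca, rac) \<Rightarrow>
   case comp0 c b of None \<Rightarrow> True | Some (rcb, rbc) \<Rightarrow>
   (case rv F rca rcb of Fail \<Rightarrow> True | Out \<Rightarrow> False | Ok u' v' \<Rightarrow>
     (case comp0 a b of None \<Rightarrow> False | Some (rab, rba) \<Rightarrow>
       (case rv F (rac @ u') rab of Ok e w \<Rightarrow> e = [] \<and>
          (case rv F (rbc @ v') rba of Ok e2 w2 \<Rightarrow> e2 = [] \<and> rv F w w2 = Ok [] [] | _ \<Rightarrow> False)
        | _ \<Rightarrow> False)))))"


lemma rel_cases[case_names lt sucr eq sucl gt]:
  fixes i j :: nat
  obtains "i + 1 < j" | "j = Suc i" | "j = i" | "i = Suc j" | "j + 1 < i"
  by linarith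

lemma cube_SigSigSig: "cube_ok (Sig i) (Sig j) (Sig k)"
  unfolding cube_ok_def F_def
  apply (cases i j rule: rel_cases; cases j k rule: rel_cases; cases i k rule: rel_cases)
  by (simp_all add: numeral_eq_Suc)

lemma cube_SigSigX: "cube_ok (Sig i) (Sig j) (X k)"
  unfolding cube_ok_def F_def
  apply (cases i j rule: rel_cases; cases j k rule: rel_cases; cases i k rule: rel_cases)
  by (simp_all add: numeral_eq_Suc)

lemma cube_SigXSig: "cube_ok (Sig i) (X j) (Sig k)"
  unfolding cube_ok_def F_def
  apply (cases i j rule: rel_cases; cases j k rule: rel_cases; cases i k rule: rel_cases)
  by (simp_all add: numeral_eq_Suc)

lemma cube_SigXX: "cube_ok (Sig i) (X j) (X k)"
  unfolding cube_ok_def F_def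
  apply (cases i j rule: rel_cases; cases j k rule: rel_cases; cases i k rule: rel_cases)
  by (simp_all add: numeral_eq_Suc)

lemma cube_XSigSig: "cube_ok (X i) (Sig j) (Sig k)"
  unfolding cube_ok_def F_def
  apply (cases i j rule: rel_cases; cases j k rule: rel_cases; cases i k rule: rel_cases)
  by (simp_all add: numeral_eq_Suc)

lemma cube_XSigX: "cube_ok (X i) (Sig j) (X k)"
  unfolding cube_ok_def F_def
  apply (cases i j rule: rel_cases; cases j k rule: rel_cases; cases i k rule: rel_cases)
  by (simp_all add: numeral_eq_Suc)

lemma cube_XXSig: "cube_ok (X i) (X j) (Sig k)"
  unfolding cube_ok_def F_def
  apply (cases i j rule: rel_cases; cases j k rule: rel_cases; cases i k rule: rel_cases)
  by (simp_all add: numeral_eq_Suc)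

lemma cube_XXX: "cube_ok (X i) (X j) (X k)"
  unfolding cube_ok_def F_def
  apply (cases i j rule: rel_cases; cases j k rule: rel_cases; cases i k rule: rel_cases)
  by (simp_all add: numeral_eq_Suc)

lemma cube_all: "cube_ok a b c"
  by (cases a; cases b; cases c) (simp_all add: cube_SigSigSig cube_SigSigX cube_SigXSig cube_SigXX
     cube_XSigSig cube_XSigX cube_XXSig cube_XXX)

declare sb_eq_trans[trans]

lemma comp0_sym: "comp0 a b = Some (r, s) \<Longrightarrow> comp0 b a = Some (s, r)"
  by (cases a; cases b) (auto split: if_splits)

lemma comp0_neq: "comp0 a b = Some (r, s) \<Longrightarrow> a \<noteq> b"
  by (cases a; cases b) (auto split: if_splits)

lemma comp0_valid: "comp0 a b = Some (r, s) \<Longrightarrow> vl n a \<Longrightarrow> vl n b \<Longrightarrow> valid_word n r \<and> valid_word n s"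
  by (cases a; cases b) (auto split: if_splits)

lemma braid': "1 \<le> i \<Longrightarrow> Suc i \<le> n - 1 \<Longrightarrow> sb_rel n [Sig i, Sig (Suc i), Sig i] [Sig (Suc i), Sig i, Sig (Suc i)]"
  using sb_rel.braid[of i n] by simp
lemma mixed1': "1 \<le> i \<Longrightarrow> Suc i \<le> n - 1 \<Longrightarrow> sb_rel n [Sig i, Sig (Suc i), X i] [X (Suc i), Sig i, Sig (Suc i)]"
  using sb_rel.mixed1[of i n] by simp
lemma mixed2': "1 \<le> i \<Longrightarrow> Suc i \<le> n - 1 \<Longrightarrow> sb_rel n [Sig (Suc i), Sig i, X (Suc i)] [X i, Sig (Suc i), Sig i]"
  using sb_rel.mixed2[of i n] by simp

lemma comp0_rel: "comp0 a b = Some (r, s) \<Longrightarrow> vl n a \<Longrightarrow> vl n b \<Longrightarrow>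
   sb_rel n (a # r) (b # s) \<or> sb_rel n (b # s) (a # r)"
  by (cases a; cases b) (auto split: if_splits intro: sb_rel.intros braid' mixed1' mixed2')

lemma comp0_eq: "comp0 a b = Some (r, s) \<Longrightarrow> vl n a \<Longrightarrow> vl n b \<Longrightarrow> sb_eq n (a # r) (b # s)"
  using sb_eq_one[of n "a#r" "b#s" "[]" "[]"] comp0_rel by auto

lemma rel_comp: "sb_rel n u v \<Longrightarrow> \<exists>a r b s. u = a # r \<and> v = b # s \<and> comp0 a b = Some (r, s) \<and> vl n a \<and> vl n b"
  by (induct rule: sb_rel.induct) auto

lemma rv_sound: "valid_word n u \<Longrightarrow> valid_word n v \<Longrightarrow> rv f u v = Ok u' v' \<Longrightarrow>
   sb_eq n (u @ u') (v @ v') \<and> valid_word n u' \<and> valid_word n v'"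
proof (induct f arbitrary: u v u' v')
  case 0 then show ?case by simp
next
  case (Suc f)
  show ?case
  proof (cases u)
    case Nil then show ?thesis using Suc.prems by (auto intro: sb_refl)
  next
    case (Cons a u1)
    show ?thesis
    proof (cases v)
      case Nil then show ?thesis using Suc.prems Cons by (auto intro: sb_refl)
    next
      case (Cons b v1)
      note uc = \<open>u = a # u1\<close>
      show ?thesis
      proof (cases "a = b")
        case True
        then have "rv f u1 v1 = Ok u' v'" using Suc.prems uc Cons by simp
        then show ?thesis using Suc.hyps[of u1 v1 u' v'] Suc.prems uc Cons True
          by (auto intro: sb_eq_Cons)
      next
        case False
        then obtain r s where c: "comp0 a b = Some (r, s)"
          using Suc.prems uc Cons by (auto split: option.splits)
        then obtain u2 r1 where r1: "rv f u1 r = Ok u2 r1"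
          using Suc.prems uc Cons False by (auto split: rres.splits)
        then obtain v2 w1 where r2: "rv f v1 (s @ r1) = Ok v2 w1"
          using Suc.prems uc Cons False c by (auto split: rres.splits)
        have res: "u' = u2 @ w1" "v' = v2"
          using Suc.prems uc Cons False c r1 r2 by auto
        have va: "vl n a" "vl n b" "valid_word n u1" "valid_word n v1"
          using Suc.prems uc Cons by auto
        have vrs: "valid_word n r" "valid_word n s" using comp0_valid[OF c va(1,2)] by auto
        have h1: "sb_eq n (u1 @ u2) (r @ r1)" "valid_word n u2" "valid_word n r1"
          using Suc.hyps[OF va(3) vrs(1) r1] by auto
        have h2: "sb_eq n (v1 @ v2) (s @ r1 @ w1)" "valid_word n v2" "valid_word n w1"
          using Suc.hyps[OF va(4) _ r2] vrs h1 by auto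
        have "sb_eq n (a # u1 @ u2 @ w1) (a # r @ r1 @ w1)"
          using sb_eq_Cons[OF sb_eq_app[OF h1(1) sb_refl[of n w1]]] by simp
        also have "sb_eq n (a # r @ r1 @ w1) (b # s @ r1 @ w1)"
          using sb_eq_app[OF comp0_eq[OF c va(1,2)] sb_refl[of n "r1 @ w1"]] by simp
        also have "sb_eq n (b # s @ r1 @ w1) (b # v1 @ v2)"
          using sb_eq_Cons[OF sb_eq_sym[OF h2(1)]] by simp
        finally show ?thesis using res uc Cons h1 h2 by simp
      qed
    qed
  qed
qed

definition lc :: "nat \<Rightarrow> sb_letter \<Rightarrow> sb_letter \<Rightarrow> sb_word \<Rightarrow> sb_word \<Rightarrow> bool" where
  "lc n a b U V \<longleftrightarrow> (if a = b then sb_eq n U V else vl n a \<and> vl n b \<and>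
     (\<exists>r s t. comp0 a b = Some (r, s) \<and> sb_eq n U (r @ t) \<and> sb_eq n V (s @ t)))"

definition Hyp :: "nat \<Rightarrow> nat \<Rightarrow> bool" where
  "Hyp n k \<longleftrightarrow> (\<forall>a b U V. length U < k \<longrightarrow> sb_eq n (a # U) (b # V) \<longrightarrow> lc n a b U V)"

lemma rv_complete:
  assumes H: "Hyp n L"
  shows "length (u @ q) \<le> L \<Longrightarrow> sb_eq n (u @ q) (v @ p) \<Longrightarrow>
    rv f u v \<noteq> Fail \<and> (\<forall>u' v'. rv f u v = Ok u' v' \<longrightarrow> (\<exists>t. sb_eq n q (u' @ t) \<and> sb_eq n p (v' @ t)))"
proof (induct f arbitrary: u v q p)
  case 0 then show ?case by simp
next
  case (Suc f)
  show ?case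
  proof (cases u)
    case Nil then show ?thesis using Suc.prems by (auto intro: sb_refl)
  next
    case (Cons a u1)
    show ?thesis
    proof (cases v)
      case Nil then show ?thesis using Suc.prems Cons by (auto intro: sb_refl sb_eq_sym)
    next
      case (Cons b v1)
      note uc = \<open>u = a # u1\<close>
      have eq: "sb_eq n (a # (u1 @ q)) (b # (v1 @ p))" using Suc.prems uc Cons by simp
      have lq: "length (u1 @ q) < L" using Suc.prems uc by simp
      have lenE: "length (v1 @ p) = length (u1 @ q)" using sb_eq_len[OF eq] by simp
      have lcab: "lc n a b (u1 @ q) (v1 @ p)" using H eq lq unfolding Hyp_def by blast
      show ?thesis
      proof (cases "a = b")
        case True
        then have "sb_eq n (u1 @ q) (v1 @ p)" using lcab by (simp add: lc_def)
        then have "rv f u1 v1 \<noteq> Fail \<and> (\<forall>u' v'. rv f u1 v1 = Ok u' v' \<longrightarrow> (\<exists>t. sb_eq n q (u' @ t) \<and> sb_eq n p (v' @ t)))"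
          using Suc.hyps[of u1 q v1 p] lq by simp
        then show ?thesis using uc Cons True by simp
      next
        case False
        then obtain r s t where c: "comp0 a b = Some (r, s)" and e1: "sb_eq n (u1 @ q) (r @ t)"
          and e2: "sb_eq n (v1 @ p) (s @ t)"
          using lcab by (auto simp: lc_def)
        have I1: "rv f u1 r \<noteq> Fail \<and> (\<forall>u' v'. rv f u1 r = Ok u' v' \<longrightarrow> (\<exists>t'. sb_eq n q (u' @ t') \<and> sb_eq n t (v' @ t')))"
          using Suc.hyps[OF _ e1] lq by simp
        show ?thesis
        proof (cases "rv f u1 r")
          case Fail then show ?thesis using I1 by simp
        next
          case Out then show ?thesis using uc Cons False c by simp
        next
          case (Ok u2 r1)
          then obtain t1 where t1: "sb_eq n q (u2 @ t1)" "sb_eq n t (r1 @ t1)" using I1 by blast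
          have e3: "sb_eq n (v1 @ p) ((s @ r1) @ t1)"
            using sb_eq_trans[OF e2 sb_eq_app[OF sb_refl[of n s] t1(2)]] by simp
          have I2: "rv f v1 (s @ r1) \<noteq> Fail \<and> (\<forall>u' v'. rv f v1 (s @ r1) = Ok u' v' \<longrightarrow> (\<exists>t'. sb_eq n p (u' @ t') \<and> sb_eq n t1 (v' @ t')))"
            using Suc.hyps[OF _ e3] lq lenE by simp
          show ?thesis
          proof (cases "rv f v1 (s @ r1)")
            case Fail then show ?thesis using I2 by simp
          next
            case Out then show ?thesis using uc Cons False c Ok by simp
          next
            case (Ok v2 w1)
            then obtain t2 where t2: "sb_eq n p (v2 @ t2)" "sb_eq n t1 (w1 @ t2)" using I2 by blast
            have "sb_eq n q ((u2 @ w1) @ t2)"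
              using sb_eq_trans[OF t1(1) sb_eq_app[OF sb_refl[of n u2] t2(2)]] by simp
            then show ?thesis using uc \<open>v = b # v1\<close> False c \<open>rv f u1 r = Ok u2 r1\<close> Ok t2 by auto
          qed
        qed
      qed
    qed
  qed
qed

lemma rv_self: "length s < f \<Longrightarrow> rv f s s = Ok [] []"
proof (induct s arbitrary: f)
  case Nil then show ?case by (cases f) auto
next
  case (Cons a s) then show ?case by (cases f) auto
qed

lemma lc_cong1: "sb_eq n U U2 \<Longrightarrow> lc n a b U2 V \<Longrightarrow> lc n a b U V"
  unfolding lc_def by (cases "a = b") (simp_all, (blast intro: sb_eq_trans)+)

lemma lc_cong2: "sb_eq n V V2 \<Longrightarrow> lc n a b U V2 \<Longrightarrow> lc n a b U V"
  unfolding lc_def by (cases "a = b") (simp_all, (blast intro: sb_eq_trans sb_eq_sym)+)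

lemma cube_step:
  assumes H: "Hyp n k" and len: "length U' = k"
    and ac: "lc n a c U U'" and cb: "lc n c b U' V"
  shows "lc n a b U V"
proof (cases "a = c")
  case True
  then have "sb_eq n U U'" using ac by (simp add: lc_def)
  then show ?thesis using lc_cong1[OF _ cb] True by simp
next
  case anc: False
  show ?thesis
  proof (cases "c = b")
    case True
    then show ?thesis using ac cb lc_cong2[of n V U' a b U] anc
      by (simp add: lc_def) (meson sb_eq_sym)
  next
    case cnb: False
    obtain r1 s1 q where va: "vl n a" "vl n c" and c1: "comp0 a c = Some (r1, s1)"
      and q: "sb_eq n U (r1 @ q)" "sb_eq n U' (s1 @ q)"
      using ac anc by (auto simp: lc_def)
    obtain r2 s2 p where vb: "vl n b" and c2: "comp0 c b = Some (r2, s2)"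
      and p: "sb_eq n U' (r2 @ p)" "sb_eq n V (s2 @ p)"
      using cb cnb by (auto simp: lc_def)
    have ca: "comp0 c a = Some (s1, r1)" using comp0_sym[OF c1] .
    have eqp: "sb_eq n (s1 @ q) (r2 @ p)" using q(2) p(1) by (meson sb_eq_sym sb_eq_trans)
    have lenq: "length (s1 @ q) \<le> k" using sb_eq_len[OF q(2)] len by simp
    note RC = rv_complete[OF H lenq eqp]
    show ?thesis
    proof (cases "a = b")
      case True
      then have "r2 = s1" "s2 = r1" using ca c2 by auto
      have "rv (Suc (length s1)) s1 s1 = Ok [] []" by (rule rv_self) simp
      then obtain t where "sb_eq n q t" "sb_eq n p t"
        using rv_complete[OF H lenq eqp[unfolded \<open>r2 = s1\<close>], of "Suc (length s1)"] by auto
      then have "sb_eq n U V" using q(1) p(2) \<open>s2 = r1\<close>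
        by (meson sb_eq_app sb_eq_sym sb_eq_trans sb_refl)
      then show ?thesis using True by (simp add: lc_def)
    next
      case anb: False
      have cube: "cube_ok a b c" by (rule cube_all)
      have vr: "valid_word n r1" "valid_word n s1" "valid_word n r2" "valid_word n s2"
        using comp0_valid[OF c1 va] comp0_valid[OF c2 va(2) vb] by auto
      obtain u' v' where R: "rv F s1 r2 = Ok u' v'"
        using cube RC anc cnb anb ca c2 unfolding cube_ok_def
        by (auto split: rres.splits)
      obtain t where t: "sb_eq n q (u' @ t)" "sb_eq n p (v' @ t)" using RC R by blast
      have vu: "valid_word n u'" "valid_word n v'" using rv_sound[OF vr(2) vr(3) R] by auto
      have C: "case comp0 a b of None \<Rightarrow> False | Some (rab, rba) \<Rightarrow>
         (case rv F (r1 @ u') rab of Ok e w \<Rightarrow> e = [] \<and>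
          (case rv F (s2 @ v') rba of Ok e2 w2 \<Rightarrow> e2 = [] \<and> rv F w w2 = Ok [] [] | _ \<Rightarrow> False)
          | _ \<Rightarrow> False)"
        using cube anc cnb anb ca c2 R unfolding cube_ok_def by simp
      then obtain rab rba where cab: "comp0 a b = Some (rab, rba)" and
        C2: "case rv F (r1 @ u') rab of Ok e w \<Rightarrow> e = [] \<and>
          (case rv F (s2 @ v') rba of Ok e2 w2 \<Rightarrow> e2 = [] \<and> rv F w w2 = Ok [] [] | _ \<Rightarrow> False)
          | _ \<Rightarrow> False"
        by (cases "comp0 a b") auto
      then obtain w where R1: "rv F (r1 @ u') rab = Ok [] w" and
        C3: "case rv F (s2 @ v') rba of Ok e2 w2 \<Rightarrow> e2 = [] \<and> rv F w w2 = Ok [] [] | _ \<Rightarrow> False"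
        by (cases "rv F (r1 @ u') rab") auto
      then obtain w2 where R2: "rv F (s2 @ v') rba = Ok [] w2" and R3: "rv F w w2 = Ok [] []"
        by (cases "rv F (s2 @ v') rba") auto
      have vab: "valid_word n rab" "valid_word n rba" using comp0_valid[OF cab va(1) vb] by auto
      have S1: "sb_eq n (r1 @ u') (rab @ w)" "valid_word n w"
        using rv_sound[OF _ vab(1) R1] vr vu by auto
      have S2: "sb_eq n (s2 @ v') (rba @ w2)" "valid_word n w2"
        using rv_sound[OF _ vab(2) R2] vr vu by auto
      have S3: "sb_eq n w w2" using rv_sound[OF S1(2) S2(2) R3] by simp
      have U: "sb_eq n U (rab @ (w @ t))"
      proof -
        have "sb_eq n U (r1 @ q)" by (rule q(1))
        also have "sb_eq n (r1 @ q) ((r1 @ u') @ t)" using sb_eq_app[OF sb_refl[of n r1] t(1)] by simp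
        also have "sb_eq n ((r1 @ u') @ t) ((rab @ w) @ t)" using sb_eq_app[OF S1(1) sb_refl] .
        finally show ?thesis by simp
      qed
      have V: "sb_eq n V (rba @ (w @ t))"
      proof -
        have "sb_eq n V (s2 @ p)" by (rule p(2))
        also have "sb_eq n (s2 @ p) ((s2 @ v') @ t)" using sb_eq_app[OF sb_refl[of n s2] t(2)] by simp
        also have "sb_eq n ((s2 @ v') @ t) ((rba @ w2) @ t)" using sb_eq_app[OF S2(1) sb_refl] .
        also have "sb_eq n ((rba @ w2) @ t) ((rba @ w) @ t)"
          using sb_eq_app[OF sb_eq_app[OF sb_refl[of n rba] sb_eq_sym[OF S3]] sb_refl[of n t]] .
        finally show ?thesis by simp
      qed
      show ?thesis using U V cab va vb anb unfolding lc_def by auto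
    qed
  qed
qed

lemma chain:
  assumes H: "Hyp n k"
  shows "sb_eq n W W' \<Longrightarrow> W = a # U \<Longrightarrow> W' = b # V \<Longrightarrow> length U = k \<Longrightarrow> lc n a b U V"
proof (induct arbitrary: a U rule: sb_eq.induct)
  case (sb_refl w) then show ?case by (auto simp: lc_def intro: sb_eq.sb_refl)
next
  case (sb_step u v p q w)
  obtain a' r c' s where uv: "(u = a' # r \<and> v = c' # s \<and> comp0 a' c' = Some (r, s) \<and> vl n a' \<and> vl n c')"
    using sb_step(1) rel_comp[of n u v] rel_comp[of n v u] comp0_sym by blast
  have lenuv: "length u = length v" using sb_step(1) sb_rel_len by metis
  obtain c U2 where cU2: "p @ v @ q = c # U2" using uv by (cases p) auto
  have one: "lc n a c U U2 \<and> length U2 = k"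
  proof (cases p)
    case Nil
    then have "a = a'" "U = r @ q" "c = c'" "U2 = s @ q" using sb_step(4) cU2 uv by auto
    moreover have "a' \<noteq> c'" using comp0_neq uv by blast
    moreover have "length r = length s" using lenuv uv by simp
    ultimately show ?thesis using uv sb_step(6) by (auto simp: lc_def intro: sb_refl)
  next
    case (Cons x p')
    then have "a = x" "U = p' @ u @ q" "c = x" "U2 = p' @ v @ q" using sb_step(4) cU2 by auto
    then show ?thesis using sb_eq_one[OF sb_step(1)] lenuv sb_step(6) by (auto simp: lc_def)
  qed
  have "lc n c b U2 V" using sb_step(3)[OF cU2 sb_step(5)] one by simp
  then show ?case using cube_step[OF H _ _] one by blast
qed

lemma Hyp_all: "Hyp n k"
proof (induct k)
  case 0 then show ?case by (simp add: Hyp_def)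
next
  case (Suc k)
  show ?case unfolding Hyp_def
  proof (intro allI impI)
    fix a b U V assume l: "length U < Suc k" and e: "sb_eq n (a # U) (b # V)"
    show "lc n a b U V"
    proof (cases "length U < k")
      case True then show ?thesis using Suc e unfolding Hyp_def by blast
    next
      case False then have "length U = k" using l by simp
      then show ?thesis using chain[OF Suc e] by simp
    qed
  qed
qed

lemma cancel1: "sb_eq n (a # U) (a # V) \<Longrightarrow> sb_eq n U V"
proof -
  assume e: "sb_eq n (a # U) (a # V)"
  have "lc n a a U V" using Hyp_all[of n "Suc (length U)"] e unfolding Hyp_def by blast
  then show ?thesis by (simp add: lc_def)
qed

lemma cancel: "sb_eq n (w @ U) (w @ V) \<Longrightarrow> sb_eq n U V"
  by (induct w) (auto dest: cancel1)

lemma lcm1: "sb_eq n (a # U) (b # V) \<Longrightarrow> a \<noteq> b \<Longrightarrow>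
   \<exists>r s t. comp0 a b = Some (r, s) \<and> sb_eq n U (r @ t) \<and> sb_eq n V (s @ t)"
proof -
  assume e: "sb_eq n (a # U) (b # V)" and ne: "a \<noteq> b"
  have "lc n a b U V" using Hyp_all[of n "Suc (length U)"] e unfolding Hyp_def by blast
  then show ?thesis using ne by (simp add: lc_def)
qed

lemma sb_eq_one': "sb_rel n u v \<Longrightarrow> sb_eq n (p @ u @ q) (p @ v @ q)"
  by (rule sb_eq_one) simp

definition far :: "nat \<Rightarrow> nat \<Rightarrow> bool" where "far i j \<longleftrightarrow> i + 1 < j \<or> j + 1 < i"

definition farw :: "nat \<Rightarrow> nat \<Rightarrow> sb_word \<Rightarrow> bool" where
  "farw n j u \<longleftrightarrow> (\<forall>l\<in>set u. \<exists>i. l = Sig i \<and> 1 \<le> i \<and> i \<le> n - 1 \<and> far i j)"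

lemma farw_simps[simp]: "farw n j []" "farw n j (a # u) \<longleftrightarrow> (\<exists>i. a = Sig i \<and> 1 \<le> i \<and> i \<le> n - 1 \<and> far i j) \<and> farw n j u"
  "farw n j (u @ v) \<longleftrightarrow> farw n j u \<and> farw n j v"
  by (auto simp: farw_def)

lemma CM: "farw n j u \<Longrightarrow> 1 \<le> j \<Longrightarrow> j \<le> n - 1 \<Longrightarrow> sb_eq n (u @ Sig j # Q0) (Sig j # u @ Q0)"
proof (induct u)
  case Nil then show ?case by (simp add: sb_refl)
next
  case (Cons a u)
  then obtain i where a: "a = Sig i" "1 \<le> i" "i \<le> n - 1" "far i j" by auto
  have "sb_eq n (a # u @ Sig j # Q0) (a # Sig j # u @ Q0)" using Cons by (auto intro: sb_eq_Cons)
  also have "sb_eq n (a # Sig j # u @ Q0) (Sig j # a # u @ Q0)"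
    using sb_eq_one'[OF sb_rel.comm_ss[of i n j], of "[]" "u @ Q0"] a Cons.prems by (auto simp: far_def)
  finally show ?case by simp
qed

lemma CL: "farw n j u \<Longrightarrow> 1 \<le> j \<Longrightarrow> j \<le> n - 1 \<Longrightarrow> sb_eq n (u @ Q0) (Sig j # Y) \<Longrightarrow> \<exists>Q0'. sb_eq n Q0 (Sig j # Q0')"
proof (induct u arbitrary: Y)
  case Nil then show ?case by auto
next
  case (Cons a u)
  then obtain i where a: "a = Sig i" "far i j" by auto
  then have "a \<noteq> Sig j" by (auto simp: far_def)
  then obtain r s t where "comp0 a (Sig j) = Some (r, s)" "sb_eq n (u @ Q0) (r @ t)"
    using lcm1[of n a "u @ Q0" "Sig j" Y] Cons.prems by auto
  then have "sb_eq n (u @ Q0) (Sig j # t)" using a by (auto simp: far_def)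
  then show ?case using Cons by auto
qed

definition R :: "nat \<Rightarrow> sb_word" where "R j = map Sig (rev [1..<Suc j])"

lemma R_0[simp]: "R 0 = []" by (simp add: R_def)
lemma R_Suc: "R (Suc j) = Sig (Suc j) # R j" by (simp add: R_def)

lemma R_set: "l \<in> set (R j) \<Longrightarrow> \<exists>i. l = Sig i \<and> 1 \<le> i \<and> i \<le> j"
  by (auto simp: R_def)

lemma farw_R: "j \<le> n - 1 \<Longrightarrow> farw n (Suc (Suc j)) (R j)"
  by (auto simp: farw_def far_def dest!: R_set)

lemma S_lemma: "Suc j \<le> n - 1 \<Longrightarrow> sb_eq n (R j @ Q0) (Sig (Suc j) # Y) \<Longrightarrow> \<exists>s. sb_eq n Q0 (R (Suc j) @ s)"
proof (induct j arbitrary: Q0 Y)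
  case 0 then show ?case by (auto simp: R_Suc)
next
  case (Suc j)
  have e0: "sb_eq n (Sig (Suc j) # R j @ Q0) (Sig (Suc (Suc j)) # Y)" using Suc.prems by (simp add: R_Suc)
  obtain r s t where c: "comp0 (Sig (Suc j)) (Sig (Suc (Suc j))) = Some (r, s)"
    and e: "sb_eq n (R j @ Q0) (r @ t)"
    using lcm1[OF e0] by auto
  then have e: "sb_eq n (R j @ Q0) (Sig (Suc (Suc j)) # Sig (Suc j) # t)" by auto
  have fw: "farw n (Suc (Suc j)) (R j)" using farw_R[of j n] Suc.prems by simp
  obtain Q0' where Q0': "sb_eq n Q0 (Sig (Suc (Suc j)) # Q0')"
    using CL[OF fw _ _ e] Suc.prems by auto
  have "sb_eq n (Sig (Suc (Suc j)) # R j @ Q0') (R j @ Sig (Suc (Suc j)) # Q0')"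
    using CM[OF fw, of Q0'] Suc.prems by (auto intro: sb_eq_sym)
  also have "sb_eq n (R j @ Sig (Suc (Suc j)) # Q0') (R j @ Q0)"
    using sb_eq_app[OF sb_refl Q0'[THEN sb_eq_sym]] .
  also note e
  finally have "sb_eq n (R j @ Q0') (Sig (Suc j) # t)" by (auto dest: cancel1)
  then obtain s where "sb_eq n Q0' (R (Suc j) @ s)" using Suc.hyps Suc.prems by force
  then have "sb_eq n Q0 (R (Suc (Suc j)) @ s)"
    using Q0' by (auto simp: R_Suc intro: sb_eq_trans sb_eq_Cons)
  then show ?case ..
qed

lemma Delta_Suc: "Delta (Suc m) = map Sig [1..<Suc m] @ Delta m"
proof (cases m)
  case 0 then show ?thesis by (simp add: Delta_def)
next
  case (Suc m')
  have "[0..<m] = 0 # map Suc [0..<m']" using Suc by (simp add: upt_conv_Cons map_Suc_upt)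
  then show ?thesis using Suc by (simp add: Delta_def o_def)
qed

lemma Delta_set: "l \<in> set (Delta m) \<Longrightarrow> \<exists>i. l = Sig i \<and> 1 \<le> i \<and> i < m"
  by (auto simp: Delta_def)

lemma rev_Delta_Suc: "rev (Delta (Suc m)) = rev (Delta m) @ R m"
  by (simp add: Delta_Suc R_def rev_map)

lemma L_lemma: "m \<le> n - 1 \<Longrightarrow> (\<forall>i. 1 \<le> i \<and> i \<le> m \<longrightarrow> (\<exists>A. sb_eq n W (Sig i # A))) \<Longrightarrow>
   \<exists>Z. sb_eq n W (rev (Delta (Suc m)) @ Z)"
proof (induct m)
  case 0 then show ?case by (auto simp: Delta_def intro: sb_refl)
next
  case (Suc m)
  obtain Z1 where Z1: "sb_eq n W (rev (Delta m) @ R m @ Z1)"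
    using Suc by (auto simp: rev_Delta_Suc)
  obtain A where A: "sb_eq n W (Sig (Suc m) # A)" using Suc.prems by auto
  have fw: "farw n (Suc m) (rev (Delta m))"
    using Suc.prems by (auto simp: farw_def far_def dest!: Delta_set)
  have "sb_eq n (rev (Delta m) @ R m @ Z1) (Sig (Suc m) # A)"
    using Z1 A by (meson sb_eq_sym sb_eq_trans)
  then obtain Q0' where "sb_eq n (R m @ Z1) (Sig (Suc m) # Q0')"
    using CL[OF fw] Suc.prems by force
  then obtain s where "sb_eq n Z1 (R (Suc m) @ s)" using S_lemma Suc.prems by force
  then have "sb_eq n W (rev (Delta m) @ R m @ R (Suc m) @ s)"
    using Z1 sb_eq_app[OF sb_refl[of n "rev (Delta m) @ R m"]] by (metis append.assoc sb_eq_trans)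
  then show ?case unfolding rev_Delta_Suc append.assoc by blast
qed


lemma upt_split3: "1 \<le> h \<Longrightarrow> Suc h \<le> m \<Longrightarrow>
  [1..<Suc m] = [1..<h] @ [h, Suc h] @ [Suc (Suc h)..<Suc m]"
proof -
  assume a: "1 \<le> h" "Suc h \<le> m"
  have "[1..<Suc m] = [1..<h] @ [h..<Suc m]"
    using upt_add_eq_append[of 1 h "Suc m - h"] a by simp
  also have "[h..<Suc m] = h # Suc h # [Suc (Suc h)..<Suc m]"
    using a by (simp add: upt_conv_Cons)
  finally show ?thesis by simp
qed

lemma I1: "1 \<le> h \<Longrightarrow> Suc h \<le> m \<Longrightarrow> m \<le> n - 1 \<Longrightarrow>
  sb_eq n (map Sig [1..<Suc m] @ Sig h # Y) (Sig (Suc h) # map Sig [1..<Suc m] @ Y)"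
proof -
  assume a: "1 \<le> h" "Suc h \<le> m" "m \<le> n - 1"
  define pre where "pre = map Sig [1..<h]"
  define post where "post = map Sig [Suc (Suc h)..<Suc m]"
  have B: "map Sig [1..<Suc m] = pre @ [Sig h, Sig (Suc h)] @ post"
    using upt_split3[OF a(1,2)] by (simp add: pre_def post_def)
  have fpost: "farw n h post" using a by (auto simp: farw_def far_def post_def)
  have fpre: "farw n (Suc h) pre" using a by (auto simp: farw_def far_def pre_def)
  have cm: "sb_eq n (post @ Sig h # Y) (Sig h # post @ Y)" using CM[OF fpost, of Y] a by simp
  have "sb_eq n (pre @ [Sig h, Sig (Suc h)] @ post @ Sig h # Y) (pre @ [Sig h, Sig (Suc h)] @ Sig h # post @ Y)"
    using sb_eq_app[OF sb_refl[of n "pre @ [Sig h, Sig (Suc h)]"] cm] by simp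
  also have "sb_eq n (pre @ [Sig h, Sig (Suc h)] @ Sig h # post @ Y) (pre @ [Sig (Suc h), Sig h, Sig (Suc h)] @ post @ Y)"
    using sb_eq_one'[OF braid'[of h n], of pre "post @ Y"] a by simp
  also have "sb_eq n (pre @ [Sig (Suc h), Sig h, Sig (Suc h)] @ post @ Y) (Sig (Suc h) # pre @ [Sig h, Sig (Suc h)] @ post @ Y)"
    using CM[OF fpre, of "[Sig h, Sig (Suc h)] @ post @ Y"] a by simp
  finally show ?thesis using B by simp
qed

lemma B_Cons: "1 \<le> m \<Longrightarrow> map Sig [1..<Suc m] = Sig 1 # map Sig [2..<Suc m]"
  using upt_conv_Cons[of 1 "Suc m"] by (simp add: numeral_2_eq_2)

lemma B_Cons2: "2 \<le> m \<Longrightarrow> map Sig [1..<Suc m] = Sig 1 # Sig 2 # map Sig [3..<Suc m]"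
proof -
  assume "2 \<le> m"
  then have "[1..<Suc m] = 1 # [2..<Suc m]" "[2..<Suc m] = 2 # [3..<Suc m]"
    using upt_conv_Cons[of 1 "Suc m"] upt_conv_Cons[of 2 "Suc m"] by (simp_all add: numeral_3_eq_3 numeral_2_eq_2)
  then show ?thesis by simp
qed

lemma F1: "1 \<le> i \<Longrightarrow> i \<le> m \<Longrightarrow> m \<le> n - 1 \<Longrightarrow> \<exists>Y. sb_eq n (Delta (Suc m)) (Sig i # Y)"
proof (induct m arbitrary: i)
  case 0 then show ?case by simp
next
  case (Suc m)
  show ?case
  proof (cases "i = 1")
    case True
    then show ?thesis using B_Cons[of "Suc m"] by (auto simp: Delta_Suc[of "Suc m"] intro: sb_refl)
  next
    case False
    then obtain h where h: "i = Suc h" "1 \<le> h" using Suc.prems by (cases i) auto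
    then obtain Y where Y: "sb_eq n (Delta (Suc m)) (Sig h # Y)" using Suc by auto
    have "sb_eq n (Delta (Suc (Suc m))) (map Sig [1..<Suc (Suc m)] @ Sig h # Y)"
      unfolding Delta_Suc[of "Suc m"] by (rule sb_eq_app[OF sb_refl Y])
    also have "sb_eq n (map Sig [1..<Suc (Suc m)] @ Sig h # Y) (Sig (Suc h) # map Sig [1..<Suc (Suc m)] @ Y)"
      using I1[of h "Suc m" n Y] h Suc.prems by simp
    finally show ?thesis using h by blast
  qed
qed

lemma F2: "1 \<le> h \<Longrightarrow> Suc h \<le> m \<Longrightarrow> m \<le> n - 1 \<Longrightarrow>
  (\<exists>Y. sb_eq n (Delta (Suc m)) (Sig (Suc h) # Sig h # Y)) \<and> (\<exists>Y. sb_eq n (Delta (Suc m)) (Sig h # Sig (Suc h) # Y))"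
proof (induct m arbitrary: h)
  case 0 then show ?case by simp
next
  case (Suc m)
  define B where "B = map Sig [1..<Suc (Suc m)]"
  have D: "Delta (Suc (Suc m)) = B @ Delta (Suc m)" by (simp add: B_def Delta_Suc[of "Suc m"])
  show ?case
  proof (cases "h = 1")
    case True
    obtain Y where Y: "sb_eq n (Delta (Suc m)) (Sig 1 # Y)" using F1[of 1 m n] Suc.prems True by auto
    have "sb_eq n (Delta (Suc (Suc m))) (B @ Sig 1 # Y)" unfolding D by (rule sb_eq_app[OF sb_refl Y])
    also have "sb_eq n (B @ Sig 1 # Y) (Sig 2 # B @ Y)"
      using I1[of 1 "Suc m" n Y] Suc.prems True by (simp add: B_def numeral_eq_Suc)
    finally have a0: "sb_eq n (Delta (Suc (Suc m))) (Sig 2 # B @ Y)" .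
    have B1: "B = Sig 1 # map Sig [2..<Suc (Suc m)]" unfolding B_def by (rule B_Cons) simp
    have a: "sb_eq n (Delta (Suc (Suc m))) (Sig 2 # Sig 1 # (map Sig [2..<Suc (Suc m)] @ Y))"
      using a0 unfolding B1 by simp
    have B2: "B = Sig 1 # Sig 2 # map Sig [3..<Suc (Suc m)]" unfolding B_def
      by (rule B_Cons2) (use Suc.prems True in simp)
    have b: "sb_eq n (Delta (Suc (Suc m))) (Sig 1 # Sig 2 # (map Sig [3..<Suc (Suc m)] @ Delta (Suc m)))"
      unfolding D B2 by (simp add: sb_eq.sb_refl)
    have two: "Suc 1 = (2::nat)" by simp
    show ?thesis unfolding True two using a b by blast
  next
    case False
    then obtain g where g: "h = Suc g" "1 \<le> g" using Suc.prems by (cases h) auto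
    have IH: "(\<exists>Y. sb_eq n (Delta (Suc m)) (Sig (Suc g) # Sig g # Y)) \<and> (\<exists>Y. sb_eq n (Delta (Suc m)) (Sig g # Sig (Suc g) # Y))"
      using Suc g by auto
    obtain Y1 where Y1: "sb_eq n (Delta (Suc m)) (Sig h # Sig g # Y1)" using IH g by auto
    obtain Y2 where Y2: "sb_eq n (Delta (Suc m)) (Sig g # Sig h # Y2)" using IH g by auto
    have I1h: "\<And>Y. sb_eq n (B @ Sig h # Y) (Sig (Suc h) # B @ Y)"
      using I1[of h "Suc m" n] Suc.prems unfolding B_def by simp
    have I1g: "\<And>Y. sb_eq n (B @ Sig g # Y) (Sig h # B @ Y)"
      using I1[of g "Suc m" n] Suc.prems g unfolding B_def by simp
    have "sb_eq n (Delta (Suc (Suc m))) (B @ Sig h # Sig g # Y1)" unfolding D by (rule sb_eq_app[OF sb_refl Y1])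
    also have "sb_eq n (B @ Sig h # Sig g # Y1) (Sig (Suc h) # B @ Sig g # Y1)" by (rule I1h)
    also have "sb_eq n (Sig (Suc h) # B @ Sig g # Y1) (Sig (Suc h) # Sig h # B @ Y1)" by (rule sb_eq_Cons[OF I1g])
    finally have a: "sb_eq n (Delta (Suc (Suc m))) (Sig (Suc h) # Sig h # B @ Y1)" .
    have "sb_eq n (Delta (Suc (Suc m))) (B @ Sig g # Sig h # Y2)" unfolding D by (rule sb_eq_app[OF sb_refl Y2])
    also have "sb_eq n (B @ Sig g # Sig h # Y2) (Sig h # B @ Sig h # Y2)" by (rule I1g)
    also have "sb_eq n (Sig h # B @ Sig h # Y2) (Sig h # Sig (Suc h) # B @ Y2)" by (rule sb_eq_Cons[OF I1h])
    finally have b: "sb_eq n (Delta (Suc (Suc m))) (Sig h # Sig (Suc h) # B @ Y2)" .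
    show ?thesis using a b by blast
  qed
qed

lemma Delta_valid: "valid_word n (Delta n)"
  unfolding valid_word_iff by (auto dest!: Delta_set)

lemma Delta_rev: "sb_eq n (Delta n) (rev (Delta n))"
proof (cases n)
  case 0 then show ?thesis by (simp add: Delta_def sb_refl)
next
  case (Suc m)
  have "\<forall>i. 1 \<le> i \<and> i \<le> m \<longrightarrow> (\<exists>A. sb_eq n (Delta n) (Sig i # A))"
    using F1[of _ m n] Suc by auto
  then obtain Z where Z: "sb_eq n (Delta n) (rev (Delta n) @ Z)" using L_lemma[of m n "Delta n"] Suc by auto
  then have "Z = []" using sb_eq_len[OF Z] by simp
  then show ?thesis using Z by simp
qed

lemma comp0_Sig: "a \<noteq> Sig j \<Longrightarrow> vl n a \<Longrightarrow> \<exists>r s. comp0 a (Sig j) = Some (r, s) \<and>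
   (r = [Sig j] \<or> (\<exists>h. r = [Sig j, Sig h] \<and> (h = Suc j \<or> j = Suc h) \<and> vl n (Sig h)))"
  by (cases a) auto

lemma F4: "2 \<le> n \<Longrightarrow> vl n a \<Longrightarrow> \<exists>a'. vl n a' \<and> sb_eq n (a # Delta n) (Delta n @ [a'])"
proof -
  assume n: "2 \<le> n" and va: "vl n a"
  obtain m where m: "n = Suc m" "1 \<le> m" using n by (cases n) auto
  have "\<forall>j. 1 \<le> j \<and> j \<le> m \<longrightarrow> (\<exists>A. sb_eq n (a # Delta n) (Sig j # A))"
  proof (intro allI impI)
    fix j assume j: "1 \<le> j \<and> j \<le> m"
    show "\<exists>A. sb_eq n (a # Delta n) (Sig j # A)"
    proof (cases "a = Sig j")
      case True then show ?thesis by (auto intro: sb_refl)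
    next
      case False
      then obtain r s where c: "comp0 a (Sig j) = Some (r, s)" and
        rr: "r = [Sig j] \<or> (\<exists>h. r = [Sig j, Sig h] \<and> (h = Suc j \<or> j = Suc h) \<and> vl n (Sig h))"
        using comp0_Sig[OF _ va] by blast
      have "\<exists>Y. sb_eq n (Delta n) (r @ Y)"
      proof -
        { assume "r = [Sig j]" then have ?thesis using F1[of j m n] j m by auto }
        moreover
        { fix h assume h: "r = [Sig j, Sig h]" "h = Suc j" "vl n (Sig h)"
          then have ?thesis using F2[of j m n] j m by auto }
        moreover
        { fix h assume h: "r = [Sig j, Sig h]" "j = Suc h" "vl n (Sig h)"
          then have ?thesis using F2[of h m n] j m by auto }
        ultimately show ?thesis using rr by blast
      qed
      then obtain Y where Y: "sb_eq n (Delta n) (r @ Y)" by blast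
      have "sb_eq n (a # Delta n) (a # r @ Y)" by (rule sb_eq_Cons[OF Y])
      also have "sb_eq n (a # r @ Y) (Sig j # s @ Y)"
        using sb_eq_app[OF comp0_eq[OF c va] sb_refl[of n Y]] j m by simp
      finally show ?thesis by blast
    qed
  qed
  then obtain Z where Z: "sb_eq n (a # Delta n) (rev (Delta n) @ Z)"
    using L_lemma[of m n "a # Delta n"] m by auto
  have Z2: "sb_eq n (a # Delta n) (Delta n @ Z)"
    using sb_eq_trans[OF Z sb_eq_app[OF sb_eq_sym[OF Delta_rev] sb_refl]] .
  then have "length Z = 1" using sb_eq_len[OF Z2] by simp
  then obtain a' where "Z = [a']" by (cases Z) auto
  moreover have "valid_word n (Delta n @ Z)" using sb_eq_valid[OF Z2] va Delta_valid by simp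
  ultimately show ?thesis using Z2 by auto
qed

lemma conj_Delta: "2 \<le> n \<Longrightarrow> valid_word n Y \<Longrightarrow> \<exists>Y'. valid_word n Y' \<and> sb_eq n (Y @ Delta n) (Delta n @ Y')"
proof (induct Y)
  case Nil then show ?case by (intro exI[of _ "[]"]) (simp add: sb_eq.sb_refl)
next
  case (Cons a Y)
  then obtain Y' where Y': "valid_word n Y'" "sb_eq n (Y @ Delta n) (Delta n @ Y')" by auto
  obtain a' where a': "vl n a'" "sb_eq n (a # Delta n) (Delta n @ [a'])" using F4 Cons.prems by auto
  have "sb_eq n (a # Y @ Delta n) (a # Delta n @ Y')" by (rule sb_eq_Cons[OF Y'(2)])
  also have "sb_eq n (a # Delta n @ Y') (Delta n @ a' # Y')"
    using sb_eq_app[OF a'(2) sb_refl[of n Y']] by simp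
  finally show ?case using a' Y' by (intro exI[of _ "a' # Y'"]) simp
qed

lemma rel_rev: "sb_rel n u v \<Longrightarrow> sb_rel n (rev u) (rev v) \<or> sb_rel n (rev v) (rev u)"
  by (induct rule: sb_rel.induct) (auto intro: sb_rel.intros braid' mixed1' mixed2')

lemma sb_eq_rev: "sb_eq n u v \<Longrightarrow> sb_eq n (rev u) (rev v)"
proof (induct rule: sb_eq.induct)
  case (sb_refl w) then show ?case by (rule sb_eq.sb_refl)
next
  case (sb_step u v p q w)
  have "sb_eq n (rev q @ rev u @ rev p) (rev q @ rev v @ rev p)"
    using sb_step(1) rel_rev by (intro sb_eq_one) blast
  then show ?case using sb_step(3) by (auto intro: sb_eq_trans)
qed

theorem proposition2p4:
  fixes n :: nat and W :: sb_word
  assumes "n \<ge> 2"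
    and "valid_word n W"
    and "(\<exists>A. (\<forall>i\<in>{1..n-1}. valid_word n (A i) \<and> sb_eq n W (Sig i # A i)))
         \<or> (\<exists>B. (\<forall>i\<in>{1..n-1}. valid_word n (B i) \<and> sb_eq n W (B i @ [Sig i])))"
  shows "\<exists>Z. valid_word n Z \<and> sb_eq n W (Delta n @ Z)"
proof -
  obtain m where m: "n = Suc m" using assms(1) by (cases n) auto
  have lm: "m \<le> n - 1" using m by simp
  show ?thesis using assms(3)
  proof
    assume "\<exists>A. (\<forall>i\<in>{1..n-1}. valid_word n (A i) \<and> sb_eq n W (Sig i # A i))"
    then have "\<forall>i. 1 \<le> i \<and> i \<le> m \<longrightarrow> (\<exists>A. sb_eq n W (Sig i # A))" using m by auto
    then obtain Z where Z: "sb_eq n W (rev (Delta n) @ Z)" using L_lemma[OF lm] m by auto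
    have Z2: "sb_eq n W (Delta n @ Z)"
      using sb_eq_trans[OF Z sb_eq_app[OF sb_eq_sym[OF Delta_rev] sb_refl]] .
    have "valid_word n Z" using sb_eq_valid[OF Z2 assms(2)] by simp
    then show ?thesis using Z2 by blast
  next
    assume "\<exists>B. (\<forall>i\<in>{1..n-1}. valid_word n (B i) \<and> sb_eq n W (B i @ [Sig i]))"
    then obtain B where B: "\<forall>i\<in>{1..n-1}. sb_eq n W (B i @ [Sig i])" by blast
    have "\<forall>i. 1 \<le> i \<and> i \<le> m \<longrightarrow> (\<exists>A. sb_eq n (rev W) (Sig i # A))"
    proof (intro allI impI)
      fix i assume "1 \<le> i \<and> i \<le> m"
      then have "sb_eq n W (B i @ [Sig i])" using B m by auto
      then have "sb_eq n (rev W) (Sig i # rev (B i))" using sb_eq_rev by fastforce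
      then show "\<exists>A. sb_eq n (rev W) (Sig i # A)" ..
    qed
    then obtain Z where Z: "sb_eq n (rev W) (rev (Delta n) @ Z)" using L_lemma[OF lm, of "rev W"] m by auto
    have vZ: "valid_word n Z" using sb_eq_valid[OF Z] assms(2) by (simp add: valid_word_def)
    have W: "sb_eq n W (rev Z @ Delta n)" using sb_eq_rev[OF Z] by simp
    obtain Y' where Y': "valid_word n Y'" "sb_eq n (rev Z @ Delta n) (Delta n @ Y')"
      using conj_Delta[OF assms(1), of "rev Z"] vZ by (auto simp: valid_word_def)
    show ?thesis using sb_eq_trans[OF W Y'(2)] Y'(1) by blast
  qed
qed

end
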